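(* Let $\Delta$ be a simplicial polytopal fan in $\mathbb{R}^d$ with ray generators $\mathbf{v}_1,\ldots,\mathbf{v}_n$. For all polytopes $P(\mathbf{h}),P(\mathbf{h}')\in\mathcal{P}(\Delta)$, \[ d_H(P(\mathbf{h}),P(\mathbf{h}'))\le\sqrt{d}\,c^\Delta\,\|\mathbf{h}-\mathbf{h}'\|. \]
   Context: A fan is simplicial if every cone is generated by linearly independent vectors; polytopal if it is the normal fan of a polytope. For $\mathbf{h}\in\mathbb{R}^n$, $P(\mathbf{h})=\{\mathbf{x}\colon\langle\mathbf{x},\mathbf{v}_i\rangle\le h_i\ \forall i\}$. The deformation cone $\mathcal{P}(\Delta)$ is the set of polytopes whose normal fan is coarsened by $\Delta$, identified via support vectors $\mathbf{h}=(h_P(\mathbf{v}_i))_i$ with a closed polyhedral cone in $\mathbb{R}^n$. For $\mathbf{u}\in\mathbb{R}^d$, with $\sigma$ the cone of $\Delta$ containing $\mathbf{u}$ in its relative interior and $\mathbf{u}=\sum_{k\in I_\sigma}\lambda_k\mathbf{v}_k$ over the generators of $\sigma$, set $[\mathbf{u}]_i=\lambda_i$ for $i\in I_\sigma$ and $0$ otherwise. $c^\Delta=\max_{\mathbf{u}\in\mathbb{S}^{d-1}}\max_{1\le i\le n}[\mathbf{u}]_i$. $d_H$ is the Hausdorff distance. *)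

theory Defs
  imports "HOL-Analysis.Analysis"
begin

definition hausdorff_dist :: "'a::metric_space set \<Rightarrow> 'a set \<Rightarrow> real" where
  "hausdorff_dist A B = max (SUP a\<in>A. infdist a B) (SUP b\<in>B. infdist b A)"

definition fan :: "'a::euclidean_space set set \<Rightarrow> bool" where
  "fan \<Delta> \<longleftrightarrow> finite \<Delta> \<and> \<Delta> \<noteq> {} \<and>
     (\<forall>C\<in>\<Delta>. polyhedron C \<and> convex_cone C) \<and>
     (\<forall>C\<in>\<Delta>. \<forall>F. F face_of C \<and> F \<noteq> {} \<longrightarrow> F \<in> \<Delta>) \<and>
     (\<forall>C\<in>\<Delta>. \<forall>C'\<in>\<Delta>. (C \<inter> C') face_of C \<and> (C \<inter> C') face_of C')"

definition simplicial_fan :: "'a::euclidean_space set set \<Rightarrow> bool" where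
  "simplicial_fan \<Delta> \<longleftrightarrow> fan \<Delta> \<and>
     (\<forall>C\<in>\<Delta>. \<exists>B. finite B \<and> independent B \<and> C = convex_cone hull B)"

definition normal_cone :: "'a::euclidean_space set \<Rightarrow> 'a set \<Rightarrow> 'a set" where
  "normal_cone Q F = {c. \<forall>x\<in>F. \<forall>y\<in>Q. inner c y \<le> inner c x}"

definition normal_fan :: "'a::euclidean_space set \<Rightarrow> 'a set set" where
  "normal_fan Q = {normal_cone Q F | F. F face_of Q \<and> F \<noteq> {}}"

definition polytopal_fan :: "'a::euclidean_space set set \<Rightarrow> bool" where
  "polytopal_fan \<Delta> \<longleftrightarrow> (\<exists>Q. polytope Q \<and> Q \<noteq> {} \<and> \<Delta> = normal_fan Q)"

definition ray_generators :: "'a::euclidean_space set set \<Rightarrow> ('n \<Rightarrow> 'a) \<Rightarrow> bool" where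
  "ray_generators \<Delta> v \<longleftrightarrow> (\<forall>i. v i \<noteq> 0) \<and>
     inj (\<lambda>i. convex_cone hull {v i}) \<and>
     {C\<in>\<Delta>. aff_dim C = 1} = range (\<lambda>i. convex_cone hull {v i})"

definition refines :: "'a set set \<Rightarrow> 'a set set \<Rightarrow> bool" where
  "refines \<Delta> \<Delta>' \<longleftrightarrow> (\<forall>C\<in>\<Delta>. \<exists>C'\<in>\<Delta>'. C \<subseteq> C') \<and> \<Union>\<Delta> = \<Union>\<Delta>'"

definition support_fun :: "'a::euclidean_space set \<Rightarrow> 'a \<Rightarrow> real" where
  "support_fun P u = (SUP x\<in>P. inner x u)"

definition Ph :: "('n::finite \<Rightarrow> 'a::euclidean_space) \<Rightarrow> real^'n \<Rightarrow> 'a set" where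
  "Ph v h = {x. \<forall>i. inner x (v i) \<le> h $ i}"

definition deformation_cone :: "'a::euclidean_space set set \<Rightarrow> ('n::finite \<Rightarrow> 'a) \<Rightarrow> (real^'n) set" where
  "deformation_cone \<Delta> v = {h. \<exists>P. polytope P \<and> P \<noteq> {} \<and> refines \<Delta> (normal_fan P) \<and>
       (\<forall>i. h $ i = support_fun P (v i))}"

text \<open>[u]_i: coefficient of v i in the expansion of u over the generators of the cone
  containing u in its relative interior (0 if v i is not a generator of that cone).\<close>
definition fan_coord :: "'a::euclidean_space set set \<Rightarrow> ('n::finite \<Rightarrow> 'a) \<Rightarrow> 'a \<Rightarrow> 'n \<Rightarrow> real" where
  "fan_coord \<Delta> v u i =
     (let \<sigma> = (THE \<sigma>. \<sigma> \<in> \<Delta> \<and> u \<in> rel_interior \<sigma>);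
          I = {k. v k \<in> \<sigma>};
          lam = (THE lam. (\<forall>k. k \<notin> I \<longrightarrow> lam k = 0) \<and> u = (\<Sum>k\<in>I. lam k *\<^sub>R v k))
      in lam i)"

definition fan_const :: "'a::euclidean_space set set \<Rightarrow> ('n::finite \<Rightarrow> 'a) \<Rightarrow> real" where
  "fan_const \<Delta> v = Sup {fan_coord \<Delta> v u i | u i. norm u = 1}"

end

theory Submission
  imports Defs
begin


lemma cone_hull_rep:
  fixes B :: "'a::euclidean_space set"
  assumes "finite B" "u \<in> convex_cone hull B"
  shows "\<exists>\<mu>. (\<forall>b\<in>B. \<mu> b \<ge> 0) \<and> u = (\<Sum>b\<in>B. \<mu> b *\<^sub>R b)"
proof (cases "u = 0")
  case True
  then show ?thesis by (intro exI[of _ "\<lambda>_. 0"]) auto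
next
  case False
  then obtain x c where x: "x \<in> convex hull B" and c: "c \<ge> 0" and u: "u = c *\<^sub>R x"
    using assms(2) unfolding convex_cone_hull_convex_hull by auto
  obtain w where w: "\<forall>b\<in>B. 0 \<le> w b" "x = (\<Sum>b\<in>B. w b *\<^sub>R b)"
    using x assms(1) unfolding convex_hull_finite[OF assms(1)] by auto
  show ?thesis
    by (intro exI[of _ "\<lambda>b. c * w b"]) (auto simp: u w c scaleR_sum_right)
qed

lemma cone_hull_sum:
  fixes B :: "'a::euclidean_space set"
  assumes "finite B" "\<forall>b\<in>B. \<mu> b \<ge> 0" "B \<subseteq> S"
  shows "(\<Sum>b\<in>B. \<mu> b *\<^sub>R b) \<in> convex_cone hull S"
  using assms
proof (induction B rule: finite_induct)
  case empty
  then show ?case by (simp add: convex_cone_hull_contains_0)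
next
  case (insert x F)
  have "\<mu> x *\<^sub>R x \<in> convex_cone hull S"
    using insert by (intro convex_cone_hull_mul hull_inc) auto
  moreover have "(\<Sum>b\<in>F. \<mu> b *\<^sub>R b) \<in> convex_cone hull S" using insert by auto
  ultimately show ?case using insert by (simp add: convex_cone_hull_add)
qed

lemma cone_hull_sum_gen:
  fixes w :: "'k \<Rightarrow> 'a::euclidean_space"
  assumes "finite K" "\<forall>k\<in>K. c k \<ge> 0" "\<forall>k\<in>K. w k \<in> S"
  shows "(\<Sum>k\<in>K. c k *\<^sub>R w k) \<in> convex_cone hull S"
  using assms
proof (induction K rule: finite_induct)
  case empty
  then show ?case by (simp add: convex_cone_hull_contains_0)
next
  case (insert x F)
  have "c x *\<^sub>R w x \<in> convex_cone hull S"
    using insert by (intro convex_cone_hull_mul hull_inc) auto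
  moreover have "(\<Sum>k\<in>F. c k *\<^sub>R w k) \<in> convex_cone hull S" using insert by auto
  ultimately show ?case using insert by (simp add: convex_cone_hull_add)
qed

lemma cone_hull_singleton:
  "convex_cone hull {b} = {t *\<^sub>R b | t. t \<ge> 0}"
  unfolding convex_cone_hull_convex_hull by (force simp: convex_hull_singleton)

lemma aff_dim_ray:
  fixes b :: "'a::euclidean_space"
  assumes "b \<noteq> 0"
  shows "aff_dim (convex_cone hull {b}) = 1"
proof -
  have s1: "{0, b} \<subseteq> convex_cone hull {b}"
    by (simp add: convex_cone_hull_contains_0 hull_inc)
  have s2: "convex_cone hull {b} \<subseteq> affine hull {0, b}"
  proof
    fix x assume "x \<in> convex_cone hull {b}"
    then obtain t where x: "x = t *\<^sub>R b" by (auto simp: cone_hull_singleton)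
    show "x \<in> affine hull {0, b}"
      unfolding x affine_hull_2 by (rule CollectI, rule exI[of _ "1 - t"], rule exI[of _ t]) simp
  qed
  have "aff_dim {0, b} \<le> aff_dim (convex_cone hull {b})" by (rule aff_dim_subset[OF s1])
  moreover have "aff_dim (convex_cone hull {b}) \<le> aff_dim (affine hull {0, b})" by (rule aff_dim_subset[OF s2])
  ultimately show ?thesis using assms by (simp add: aff_dim_affine_hull)
qed

lemma indep_parallel:
  fixes B :: "'a::euclidean_space set"
  assumes "independent B" "b \<in> B" "b' \<in> B" "b = t *\<^sub>R b'"
  shows "b = b'"
proof (rule ccontr)
  assume "b \<noteq> b'"
  then have "b \<in> span (B - {b})" using assms by (simp add: span_base span_mul)
  then show False using assms(1,2) dependent_def by blast
qed

lemma ray_face: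
  fixes B :: "'a::euclidean_space set"
  assumes "finite B" "independent B" "b \<in> B"
  shows "convex_cone hull {b} face_of convex_cone hull B"
proof -
  obtain f where lf: "linear f" and fB: "\<forall>x\<in>B. f x = (if x = b then (0::real) else 1)"
    using linear_independent_extend[OF assms(2), of "\<lambda>x. if x = b then (0::real) else 1"] by blast
  have key: "f y \<ge> 0 \<and> (f y = 0 \<longrightarrow> y \<in> convex_cone hull {b})" if y: "y \<in> convex_cone hull B" for y
  proof -
    obtain \<mu> where mu: "\<forall>b\<in>B. \<mu> b \<ge> 0" "y = (\<Sum>b\<in>B. \<mu> b *\<^sub>R b)"
      using cone_hull_rep[OF assms(1) y] by blast
    have fy: "f y = (\<Sum>x\<in>B. \<mu> x * f x)"
      using mu(2) lf by (simp add: linear_sum linear_scale)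
    also have "\<dots> = (\<Sum>x\<in>B - {b}. \<mu> x)"
      using assms(1,3) fB by (simp add: sum.remove if_distrib sum.If_cases)
    finally have fy': "f y = (\<Sum>x\<in>B - {b}. \<mu> x)" .
    have "f y \<ge> 0" unfolding fy' using mu(1) by (intro sum_nonneg) auto
    moreover have "y \<in> convex_cone hull {b}" if "f y = 0"
    proof -
      have "sum \<mu> (B - {b}) = 0" using that fy' by simp
      then have "\<forall>x\<in>B - {b}. \<mu> x = 0"
        using sum_nonneg_eq_0_iff[of "B - {b}" \<mu>] assms(1) mu(1) by auto
      then have "y = \<mu> b *\<^sub>R b"
        using mu(2) assms(1,3) by (simp add: sum.remove)
      then show ?thesis using mu(1) assms(3) by (auto simp: cone_hull_singleton)
    qed
    ultimately show ?thesis by blast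
  qed
  have f0: "f x = 0" if "x \<in> convex_cone hull {b}" for x
    using that fB assms(3) lf by (auto simp: cone_hull_singleton linear_scale)
  show ?thesis
    unfolding face_of_def
  proof (intro conjI)
    show "convex_cone hull {b} \<subseteq> convex_cone hull B" using assms(3) by (simp add: hull_mono)
    show "convex (convex_cone hull {b})" by (rule convex_convex_cone_hull)
    show "\<forall>a\<in>convex_cone hull B. \<forall>c\<in>convex_cone hull B. \<forall>x\<in>convex_cone hull {b}.
            x \<in> open_segment a c \<longrightarrow> a \<in> convex_cone hull {b} \<and> c \<in> convex_cone hull {b}"
    proof (intro ballI impI)
      fix a c x assume a: "a \<in> convex_cone hull B" and c: "c \<in> convex_cone hull B"
        and x: "x \<in> convex_cone hull {b}" and xs: "x \<in> open_segment a c"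
      obtain t where t: "0 < t" "t < 1" "x = (1 - t) *\<^sub>R a + t *\<^sub>R c"
        using xs by (auto simp: in_segment)
      have "f x = (1 - t) * f a + t * f c" using t(3) lf by (simp add: linear_add linear_scale)
      moreover have "f x = 0" using f0 x by blast
      moreover have "f a \<ge> 0" "f c \<ge> 0" using key a c by auto
      ultimately have "f a = 0" "f c = 0" using t(1,2)
        by (smt (verit) mult_nonneg_nonneg mult_pos_pos)+
      then show "a \<in> convex_cone hull {b} \<and> c \<in> convex_cone hull {b}" using key a c by auto
    qed
  qed
qed

lemma face_sum_conic:
  fixes S F :: "'a::euclidean_space set"
  assumes "F face_of S" "conic S" "conic F" "y \<in> S" "z \<in> S" "y + z \<in> F"
  shows "y \<in> F"
proof (cases "y = z")
  case True
  have "2 *\<^sub>R z \<in> F" using assms(6) True by (simp add: scaleR_2)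
  then have "(1/2::real) *\<^sub>R (2 *\<^sub>R z) \<in> F" using conic_mul[OF assms(3), of "2 *\<^sub>R z" "1/2"] by simp
  then show ?thesis using True by simp
next
  case False
  have a: "2 *\<^sub>R y \<in> S" "2 *\<^sub>R z \<in> S" using assms(2,4,5) by (auto simp: conic_def)
  have "midpoint (2 *\<^sub>R y) (2 *\<^sub>R z) = y + z" by (simp add: midpoint_def algebra_simps)
  moreover have "midpoint (2 *\<^sub>R y) (2 *\<^sub>R z) \<in> open_segment (2 *\<^sub>R y) (2 *\<^sub>R z)" using False by simp
  ultimately have "2 *\<^sub>R y \<in> F" using assms(1,6) a unfolding face_of_def by metis
  then have "(1/2::real) *\<^sub>R (2 *\<^sub>R y) \<in> F" using conic_mul[OF assms(3), of "2 *\<^sub>R y" "1/2"] by simp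
  then show ?thesis by simp
qed



lemma fan_props:
  assumes "fan \<Delta>"
  shows "finite \<Delta>" "\<And>C. C \<in> \<Delta> \<Longrightarrow> polyhedron C \<and> convex_cone C"
    "\<And>C F. C \<in> \<Delta> \<Longrightarrow> F face_of C \<Longrightarrow> F \<noteq> {} \<Longrightarrow> F \<in> \<Delta>"
    "\<And>C C'. C \<in> \<Delta> \<Longrightarrow> C' \<in> \<Delta> \<Longrightarrow> (C \<inter> C') face_of C \<and> (C \<inter> C') face_of C'"
  using assms unfolding fan_def by blast+

lemma scale_solve: "(c::real) \<noteq> 0 \<Longrightarrow> x = c *\<^sub>R (y::'a::real_vector) \<Longrightarrow> y = (1/c) *\<^sub>R x"
  by simp

lemma simp_struct:
  fixes \<Delta> :: "'a::euclidean_space set set" and v :: "'n::finite \<Rightarrow> 'a"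
  assumes sf: "simplicial_fan \<Delta>" and rg: "ray_generators \<Delta> v" and \<sigma>: "\<sigma> \<in> \<Delta>"
  shows "(\<forall>u\<in>\<sigma>. \<exists>lam. (\<forall>k. v k \<notin> \<sigma> \<longrightarrow> lam k = 0) \<and> (\<forall>k. lam k \<ge> 0) \<and>
            u = (\<Sum>k\<in>{k. v k \<in> \<sigma>}. lam k *\<^sub>R v k)) \<and> independent (v ` {k. v k \<in> \<sigma>})"
proof -
  define I where "I = {k. v k \<in> \<sigma>}"
  have fan: "fan \<Delta>" using sf by (simp add: simplicial_fan_def)
  obtain B where B: "finite B" "independent B" "\<sigma> = convex_cone hull B"
    using sf \<sigma> unfolding simplicial_fan_def by blast
  have v0: "\<And>i. v i \<noteq> 0" and injR: "inj (\<lambda>i. convex_cone hull {v i})"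
    and rays: "{C\<in>\<Delta>. aff_dim C = 1} = range (\<lambda>i. convex_cone hull {v i})"
    using rg unfolding ray_generators_def by blast+
  have B0: "0 \<notin> B" using B(2) dependent_zero by blast
  have "\<exists>i. convex_cone hull {b} = convex_cone hull {v i}" if b: "b \<in> B" for b
  proof -
    have "convex_cone hull {b} face_of \<sigma>" using ray_face[OF B(1,2) b] B(3) by simp
    moreover have "convex_cone hull {b} \<noteq> {}" by (rule convex_cone_hull_nonempty)
    ultimately have "convex_cone hull {b} \<in> \<Delta>" using fan_props(3)[OF fan \<sigma>] by blast
    moreover have "aff_dim (convex_cone hull {b}) = 1" using aff_dim_ray B0 b by metis
    ultimately have "convex_cone hull {b} \<in> range (\<lambda>i. convex_cone hull {v i})"
      using rays by blast
    then show ?thesis by blast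
  qed
  then obtain ib where ib: "\<And>b. b \<in> B \<Longrightarrow> convex_cone hull {b} = convex_cone hull {v (ib b)}"
    by metis
  have "\<exists>s>0. b = s *\<^sub>R v (ib b)" if b: "b \<in> B" for b
  proof -
    have "b \<in> convex_cone hull {v (ib b)}" using ib[OF b] hull_inc[of b "{b}"] by auto
    then obtain t where t: "t \<ge> 0" "b = t *\<^sub>R v (ib b)" by (auto simp: cone_hull_singleton)
    have "t \<noteq> 0" using t B0 b by auto
    then show ?thesis using t by (intro exI[of _ t]) auto
  qed
  then obtain s where s: "\<And>b. b \<in> B \<Longrightarrow> s b > 0" "\<And>b. b \<in> B \<Longrightarrow> b = s b *\<^sub>R v (ib b)"
    by metis
  have ibI: "ib b \<in> I" if b: "b \<in> B" for b
  proof -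
    have "v (ib b) \<in> convex_cone hull {v (ib b)}" by (simp add: hull_inc)
    also have "\<dots> = convex_cone hull {b}" using ib[OF b] by simp
    also have "\<dots> \<subseteq> \<sigma>" using B(3) b by (simp add: hull_mono)
    finally show ?thesis by (simp add: I_def)
  qed
  have injib: "inj_on ib B"
  proof (rule inj_onI)
    fix b b' assume b: "b \<in> B" "b' \<in> B" "ib b = ib b'"
    have e: "v (ib b') = (1 / s b') *\<^sub>R b'" using scale_solve[OF _ s(2)[OF b(2)]] s(1)[OF b(2)] by simp
    have "b = s b *\<^sub>R v (ib b')" using s(2)[OF b(1)] b(3) by simp
    also have "\<dots> = (s b / s b') *\<^sub>R b'" unfolding e by simp
    finally have "b = (s b / s b') *\<^sub>R b'" .
    then show "b = b'" using indep_parallel[OF B(2) b(1,2)] by blast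
  qed
  have cvxc: "convex_cone \<sigma>" "conic \<sigma>" using B(3) convex_cone_convex_cone_hull conic_convex_cone_hull by auto
  have Isub: "I \<subseteq> ib ` B"
  proof
    fix k assume k: "k \<in> I"
    then have vk: "v k \<in> \<sigma>" by (simp add: I_def)
    define R where "R = convex_cone hull {v k}"
    have R\<Delta>: "R \<in> \<Delta>" using rays R_def by blast
    have RS: "R \<subseteq> \<sigma>" unfolding R_def using vk cvxc(1) by (simp add: hull_minimal)
    have Rf: "R face_of \<sigma>" using fan_props(4)[OF fan R\<Delta> \<sigma>] RS by (simp add: Int_absorb2)
    obtain \<mu> where mu: "\<forall>b\<in>B. \<mu> b \<ge> 0" "v k = (\<Sum>b\<in>B. \<mu> b *\<^sub>R b)"
      using cone_hull_rep[OF B(1)] vk B(3) by blast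
    have "\<exists>b1\<in>B. \<mu> b1 \<noteq> 0"
    proof (rule ccontr)
      assume "\<not> ?thesis" then have "v k = 0" using mu(2) by simp
      then show False using v0 by blast
    qed
    then obtain b1 where b1: "b1 \<in> B" "\<mu> b1 > 0" using mu(1) by force
    have y: "\<mu> b1 *\<^sub>R b1 \<in> \<sigma>" using B(3) b1 by (simp add: convex_cone_hull_mul hull_inc)
    have z: "(\<Sum>b\<in>B - {b1}. \<mu> b *\<^sub>R b) \<in> \<sigma>" using B(3) B(1) mu(1) by (intro cone_hull_sum[of "B - {b1}" \<mu> B, simplified B(3)[symmetric]]) auto
    have "\<mu> b1 *\<^sub>R b1 + (\<Sum>b\<in>B - {b1}. \<mu> b *\<^sub>R b) = v k" using mu(2) B(1) b1(1) by (simp add: sum.remove)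
    then have "\<mu> b1 *\<^sub>R b1 + (\<Sum>b\<in>B - {b1}. \<mu> b *\<^sub>R b) \<in> R" by (simp add: R_def hull_inc)
    then have "\<mu> b1 *\<^sub>R b1 \<in> R" using face_sum_conic[OF Rf cvxc(2) _ y z] R_def conic_convex_cone_hull by blast
    then obtain t where t: "t \<ge> 0" "\<mu> b1 *\<^sub>R b1 = t *\<^sub>R v k" by (auto simp: R_def cone_hull_singleton)
    have "t \<noteq> 0" using t b1 B0 by auto
    have "b1 = (1 / \<mu> b1) *\<^sub>R (\<mu> b1 *\<^sub>R b1)" using b1(2) by simp
    also have "\<dots> = (1 / \<mu> b1) *\<^sub>R (t *\<^sub>R v k)" using t(2) by simp
    also have "\<dots> = (t / \<mu> b1) *\<^sub>R v k" by simp
    finally have tt: "b1 = (t / \<mu> b1) *\<^sub>R v k" .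
    have "t / \<mu> b1 > 0" using t b1(2) \<open>t \<noteq> 0\<close> by auto
    note tt = tt this
    define c where "c = t / \<mu> b1"
    have tt1: "b1 = c *\<^sub>R v k" unfolding c_def by (fact tt(1))
    have tt2: "c > 0" unfolding c_def by (fact tt(2))
    note tt = tt1 tt2
    have "convex_cone hull {b1} = R"
    proof -
      have "convex_cone hull {b1} = {x *\<^sub>R v k | x. x \<ge> 0}"
        unfolding cone_hull_singleton
      proof (intro set_eqI iffI)
        fix x assume "x \<in> {t *\<^sub>R b1 |t. 0 \<le> t}"
        then obtain r where "r \<ge> 0" "x = r *\<^sub>R b1" by blast
        then show "x \<in> {x *\<^sub>R v k |x. 0 \<le> x}" using tt
          by (intro CollectI exI[of _ "r * c"]) auto
      next
        fix x assume "x \<in> {x *\<^sub>R v k |x. 0 \<le> x}"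
        then obtain r where "r \<ge> 0" "x = r *\<^sub>R v k" by blast
        then show "x \<in> {t *\<^sub>R b1 |t. 0 \<le> t}" using tt
          by (intro CollectI exI[of _ "r / c"]) auto
      qed
      then show ?thesis by (simp add: R_def cone_hull_singleton)
    qed
    then have "convex_cone hull {v (ib b1)} = convex_cone hull {v k}" using ib[OF b1(1)] R_def by simp
    then have "ib b1 = k" using injR by (simp add: inj_def)
    then show "k \<in> ib ` B" using b1(1) by blast
  qed
  have Ieq: "I = ib ` B" using Isub ibI by blast
  have exist: "\<exists>lam. (\<forall>k. v k \<notin> \<sigma> \<longrightarrow> lam k = 0) \<and> (\<forall>k. lam k \<ge> 0) \<and> u = (\<Sum>k\<in>I. lam k *\<^sub>R v k)"
    if u: "u \<in> \<sigma>" for u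
  proof -
    obtain \<mu> where mu: "\<forall>b\<in>B. \<mu> b \<ge> 0" "u = (\<Sum>b\<in>B. \<mu> b *\<^sub>R b)"
      using cone_hull_rep[OF B(1)] u B(3) by blast
    define lam where "lam k = (if k \<in> ib ` B then \<mu> (inv_into B ib k) * s (inv_into B ib k) else 0)" for k
    have "(\<Sum>k\<in>I. lam k *\<^sub>R v k) = (\<Sum>b\<in>B. lam (ib b) *\<^sub>R v (ib b))"
      unfolding Ieq by (rule sum.reindex[OF injib, unfolded comp_def])
    also have "\<dots> = (\<Sum>b\<in>B. \<mu> b *\<^sub>R b)"
    proof (rule sum.cong[OF refl])
      fix b assume b: "b \<in> B"
      have "lam (ib b) = \<mu> b * s b" using b injib by (simp add: lam_def inv_into_f_f)
      then show "lam (ib b) *\<^sub>R v (ib b) = \<mu> b *\<^sub>R b" using s(2)[OF b] by (metis scaleR_scaleR)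
    qed
    finally have "u = (\<Sum>k\<in>I. lam k *\<^sub>R v k)" using mu(2) by simp
    moreover have "\<forall>k. v k \<notin> \<sigma> \<longrightarrow> lam k = 0" using Ieq by (auto simp: lam_def I_def)
    moreover have "\<forall>k. lam k \<ge> 0"
      using mu(1) s(1) by (auto simp: lam_def inv_into_into less_imp_le)
    ultimately show ?thesis by blast
  qed
  have indep: "independent (v ` I)"
  proof (rule card_le_dim_spanning[of _ "span B"])
    show "v ` I \<subseteq> span B"
    proof
      fix x assume "x \<in> v ` I"
      then have "x \<in> \<sigma>" by (auto simp: I_def)
      then obtain \<mu> where "x = (\<Sum>b\<in>B. \<mu> b *\<^sub>R b)" using cone_hull_rep[OF B(1)] B(3) by blast
      then show "x \<in> span B" by (simp add: span_sum span_mul span_base)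
    qed
    have "B \<subseteq> span (v ` I)"
    proof
      fix b assume b: "b \<in> B"
      have "v (ib b) \<in> v ` I" using ibI[OF b] by blast
      then show "b \<in> span (v ` I)" using s(2)[OF b] by (metis span_base span_mul)
    qed
    then show "span B \<subseteq> span (v ` I)" by (simp add: span_minimal)
    show "finite (v ` I)" by simp
    have "card (v ` I) \<le> card I" by (rule card_image_le) simp
    also have "\<dots> \<le> card B" unfolding Ieq by (rule card_image_le[OF B(1)])
    also have "\<dots> = dim (span B)" using dim_span_eq_card_independent[OF B(2)] by simp
    finally show "card (v ` I) \<le> dim (span B)" .
  qed
  show ?thesis using exist indep unfolding I_def by blast
qed



lemma normal_fan_cover:
  fixes Q :: "'a::euclidean_space set"
  assumes "polytope Q" "Q \<noteq> {}"
  shows "\<Union>(normal_fan Q) = UNIV"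
proof -
  have "c \<in> \<Union>(normal_fan Q)" for c
  proof -
    have cQ: "compact Q" using assms(1) by (rule polytope_imp_compact)
    have ct: "continuous_on Q (\<lambda>x. inner c x)" by (intro continuous_intros)
    obtain x0 where x0: "x0 \<in> Q" "\<forall>y\<in>Q. inner c y \<le> inner c x0"
      using continuous_attains_sup[OF cQ assms(2) ct] by blast
    define F where "F = Q \<inter> {x. c \<bullet> x = c \<bullet> x0}"
    have "F face_of Q" unfolding F_def
      using x0 polytope_imp_convex[OF assms(1)] by (intro face_of_Int_supporting_hyperplane_le) auto
    moreover have "F \<noteq> {}" using x0 by (auto simp: F_def)
    moreover have "c \<in> normal_cone Q F" using x0 by (auto simp: normal_cone_def F_def)
    ultimately show ?thesis unfolding normal_fan_def by blast
  qed
  then show ?thesis by blast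
qed

lemma bdd_inner:
  fixes P :: "'a::euclidean_space set"
  assumes "bounded P"
  shows "bdd_above ((\<lambda>x. inner x u) ` P)"
proof -
  obtain M where M: "\<forall>x\<in>P. norm x \<le> M" using assms bounded_iff by blast
  have "inner x u \<le> M * norm u" if "x \<in> P" for x
  proof -
    have "inner x u \<le> norm x * norm u" by (rule norm_cauchy_schwarz)
    also have "\<dots> \<le> M * norm u" using M that by (simp add: mult_right_mono)
    finally show ?thesis .
  qed
  then show ?thesis by (intro bdd_aboveI2) 
qed

lemma support_ge:
  fixes P :: "'a::euclidean_space set"
  assumes "bounded P" "x \<in> P"
  shows "inner x u \<le> support_fun P u"
  unfolding support_fun_def using bdd_inner[OF assms(1)] assms(2) by (rule cSUP_upper2) auto

lemma support_le:
  fixes P :: "'a::euclidean_space set"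
  assumes "P \<noteq> {}" "\<And>x. x \<in> P \<Longrightarrow> inner x u \<le> M"
  shows "support_fun P u \<le> M"
  unfolding support_fun_def using assms by (intro cSUP_least) auto

lemma support_normal:
  fixes P :: "'a::euclidean_space set"
  assumes "F face_of P" "w \<in> normal_cone P F" "x0 \<in> F"
  shows "support_fun P w = inner x0 w"
proof -
  have x0P: "x0 \<in> P" using assms(1,3) face_of_imp_subset by blast
  have "\<forall>y\<in>P. inner y w \<le> inner x0 w"
    using assms(2,3) by (auto simp: normal_cone_def inner_commute)
  then show ?thesis unfolding support_fun_def using x0P
    by (intro cSup_eq_maximum) auto
qed

lemma fan_relint_ex:
  fixes \<Delta> :: "'a::euclidean_space set set"
  assumes fan: "fan \<Delta>" and cov: "\<Union>\<Delta> = UNIV"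
  shows "\<exists>\<sigma>\<in>\<Delta>. u \<in> rel_interior \<sigma>"
proof -
  obtain C where C: "C \<in> \<Delta>" "u \<in> C" using cov by blast
  have polyC: "polyhedron C" using fan_props(2)[OF fan C(1)] by blast
  let ?P = "\<lambda>F. F face_of C \<and> u \<in> F"
  have "?P C" using C polyC by (simp add: face_of_refl polyhedron_imp_convex)
  then obtain F where F: "?P F" and Fmin: "\<forall>G. ?P G \<longrightarrow> nat (aff_dim F + 1) \<le> nat (aff_dim G + 1)"
    using ex_has_least_nat[of ?P C "\<lambda>F. nat (aff_dim F + 1)"] by blast
  have "u \<in> rel_interior F"
  proof (rule ccontr)
    assume nr: "u \<notin> rel_interior F"
    have polyF: "polyhedron F" using face_of_polyhedron_polyhedron polyC F by blast
    have "u \<in> rel_frontier F" using nr F closure_subset unfolding rel_frontier_def by blast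
    then obtain G where G: "G facet_of F" "u \<in> G" using rel_frontier_of_polyhedron[OF polyF] by blast
    have "G face_of C" using G(1) F face_of_trans unfolding facet_of_def by blast
    then have le: "nat (aff_dim F + 1) \<le> nat (aff_dim G + 1)" using Fmin G(2) by blast
    have "aff_dim G = aff_dim F - 1" "G \<noteq> {}" using G(1) unfolding facet_of_def by auto
    moreover have "aff_dim G \<ge> 0" using \<open>G \<noteq> {}\<close> aff_dim_negative_iff[of G] by linarith
    ultimately show False using le by linarith
  qed
  moreover have "F \<in> \<Delta>" using fan_props(3)[OF fan C(1)] F by blast
  ultimately show ?thesis by blast
qed

lemma fan_relint_uniq:
  fixes \<Delta> :: "'a::euclidean_space set set"
  assumes fan: "fan \<Delta>" and "\<sigma> \<in> \<Delta>" "\<sigma>' \<in> \<Delta>" "u \<in> rel_interior \<sigma>" "u \<in> rel_interior \<sigma>'"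
  shows "\<sigma> = \<sigma>'"
proof -
  have f: "(\<sigma> \<inter> \<sigma>') face_of \<sigma>" "(\<sigma> \<inter> \<sigma>') face_of \<sigma>'" using fan_props(4)[OF fan assms(2,3)] by auto
  have u: "u \<in> \<sigma> \<inter> \<sigma>'" using assms(4,5) rel_interior_subset by blast
  have "\<sigma> \<subseteq> \<sigma> \<inter> \<sigma>'" using subset_of_face_of[OF f(1) subset_refl] u assms(4) by blast
  moreover have "\<sigma>' \<subseteq> \<sigma> \<inter> \<sigma>'" using subset_of_face_of[OF f(2) subset_refl] u assms(5) by blast
  ultimately show ?thesis by blast
qed

lemma rg_inj:
  assumes "ray_generators \<Delta> v"
  shows "inj v"
  using assms unfolding ray_generators_def inj_def by metis

lemma rep_unique:
  fixes v :: "'n \<Rightarrow> 'a::euclidean_space"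
  assumes ind: "independent (v ` I)" and inj: "inj_on v I" and fin: "finite I"
    and z1: "\<forall>k. k \<notin> I \<longrightarrow> lam k = 0" and z2: "\<forall>k. k \<notin> I \<longrightarrow> lam' k = 0"
    and eq: "(\<Sum>k\<in>I. lam k *\<^sub>R v k) = (\<Sum>k\<in>I. lam' k *\<^sub>R v k)"
  shows "lam = lam'"
proof -
  define c where "c x = lam (inv_into I v x) - lam' (inv_into I v x)" for x
  have "(\<Sum>x\<in>v ` I. c x *\<^sub>R x) = (\<Sum>k\<in>I. c (v k) *\<^sub>R v k)"
    by (rule sum.reindex[OF inj, unfolded comp_def])
  also have "\<dots> = (\<Sum>k\<in>I. (lam k - lam' k) *\<^sub>R v k)"
    using inj by (intro sum.cong) (auto simp: c_def inv_into_f_f)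
  also have "\<dots> = 0" using eq by (simp add: scaleR_diff_left sum_subtractf)
  finally have "(\<Sum>x\<in>v ` I. c x *\<^sub>R x) = 0" .
  then have "\<forall>x\<in>v ` I. c x = 0" using ind unfolding independent_explicit by blast
  then have "lam k = lam' k" if "k \<in> I" for k
    using that inj by (auto simp: c_def inv_into_f_f)
  then show ?thesis using z1 z2 by (metis ext)
qed



lemma fan_coord_eq:
  fixes \<Delta> :: "'a::euclidean_space set set" and v :: "'n::finite \<Rightarrow> 'a"
  assumes sf: "simplicial_fan \<Delta>" and rg: "ray_generators \<Delta> v" and \<sigma>: "\<sigma> \<in> \<Delta>"
    and u: "u \<in> rel_interior \<sigma>"
    and z: "\<forall>k. v k \<notin> \<sigma> \<longrightarrow> lam k = 0" and eq: "u = (\<Sum>k\<in>{k. v k \<in> \<sigma>}. lam k *\<^sub>R v k)"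
  shows "fan_coord \<Delta> v u i = lam i"
proof -
  have fan: "fan \<Delta>" using sf by (simp add: simplicial_fan_def)
  have th1: "(THE \<sigma>. \<sigma> \<in> \<Delta> \<and> u \<in> rel_interior \<sigma>) = \<sigma>"
    by (rule the_equality) (use \<sigma> u fan_relint_uniq[OF fan] in blast)+
  have ind: "independent (v ` {k. v k \<in> \<sigma>})" using simp_struct[OF sf rg \<sigma>] by blast
  have inj: "inj_on v {k. v k \<in> \<sigma>}" using rg_inj[OF rg] by (simp add: inj_on_def inj_def)
  have th2: "(THE lam. (\<forall>k. k \<notin> {k. v k \<in> \<sigma>} \<longrightarrow> lam k = 0) \<and> u = (\<Sum>k\<in>{k. v k \<in> \<sigma>}. lam k *\<^sub>R v k)) = lam"
  proof (rule the_equality)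
    show "(\<forall>k. k \<notin> {k. v k \<in> \<sigma>} \<longrightarrow> lam k = 0) \<and> u = (\<Sum>k\<in>{k. v k \<in> \<sigma>}. lam k *\<^sub>R v k)"
      using z eq by simp
  next
    fix lam' assume a: "(\<forall>k. k \<notin> {k. v k \<in> \<sigma>} \<longrightarrow> lam' k = 0) \<and> u = (\<Sum>k\<in>{k. v k \<in> \<sigma>}. lam' k *\<^sub>R v k)"
    show "lam' = lam"
      by (rule rep_unique[OF ind inj]) (use a z eq in auto)
  qed
  show ?thesis unfolding fan_coord_def Let_def th1 th2 ..
qed

lemma coord_bound:
  fixes \<Delta> :: "'a::euclidean_space set set" and v :: "'n::finite \<Rightarrow> 'a"
  assumes sf: "simplicial_fan \<Delta>" and rg: "ray_generators \<Delta> v" and \<sigma>: "\<sigma> \<in> \<Delta>"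
  shows "\<exists>K. \<forall>u lam. (\<forall>k. v k \<notin> \<sigma> \<longrightarrow> lam k = 0) \<and> u = (\<Sum>k\<in>{k. v k \<in> \<sigma>}. lam k *\<^sub>R v k)
            \<longrightarrow> lam i \<le> K * norm u"
proof (cases "v i \<in> \<sigma>")
  case False
  then show ?thesis by (intro exI[of _ 0]) auto
next
  case True
  define I where "I = {k. v k \<in> \<sigma>}"
  have ind: "independent (v ` I)" using simp_struct[OF sf rg \<sigma>] by (simp add: I_def)
  have inj: "inj v" using rg_inj[OF rg] .
  obtain g :: "'a \<Rightarrow> real" where lg: "linear g" and g: "\<forall>x\<in>v ` I. g x = (if x = v i then 1 else 0)"
    using linear_independent_extend[OF ind, of "\<lambda>x. if x = v i then (1::real) else 0"] by blast
  obtain K where K: "\<forall>x. norm (g x) \<le> K * norm x" using linear_bounded[OF lg] by blast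
  show ?thesis
  proof (intro exI[of _ K] allI impI)
    fix u lam assume a: "(\<forall>k. v k \<notin> \<sigma> \<longrightarrow> lam k = 0) \<and> u = (\<Sum>k\<in>{k. v k \<in> \<sigma>}. lam k *\<^sub>R v k)"
    have "g u = (\<Sum>k\<in>I. lam k * g (v k))"
      using a lg by (simp add: I_def linear_sum linear_scale)
    also have "\<dots> = (\<Sum>k\<in>I. if k = i then lam k else 0)"
      using g inj by (intro sum.cong) (auto simp: inj_eq)
    also have "\<dots> = lam i" using True by (simp add: I_def)
    finally have "lam i = g u" by simp
    also have "\<dots> \<le> norm (g u)" by simp
    also have "\<dots> \<le> K * norm u" using K by blast
    finally show "lam i \<le> K * norm u" .
  qed
qed

lemma polytopal_cover:
  assumes "polytopal_fan \<Delta>"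
  shows "\<Union>\<Delta> = UNIV"
  using assms normal_fan_cover unfolding polytopal_fan_def by blast

lemma coord_decomp:
  fixes \<Delta> :: "'a::euclidean_space set set" and v :: "'n::finite \<Rightarrow> 'a"
  assumes sf: "simplicial_fan \<Delta>" and pf: "polytopal_fan \<Delta>" and rg: "ray_generators \<Delta> v"
  shows "\<exists>\<sigma>\<in>\<Delta>. \<exists>lam. u \<in> rel_interior \<sigma> \<and> (\<forall>k. v k \<notin> \<sigma> \<longrightarrow> lam k = 0) \<and> (\<forall>k. lam k \<ge> 0) \<and>
            u = (\<Sum>k\<in>{k. v k \<in> \<sigma>}. lam k *\<^sub>R v k) \<and> (\<forall>i. fan_coord \<Delta> v u i = lam i)"
proof -
  have fan: "fan \<Delta>" using sf by (simp add: simplicial_fan_def)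
  obtain \<sigma> where \<sigma>: "\<sigma> \<in> \<Delta>" "u \<in> rel_interior \<sigma>"
    using fan_relint_ex[OF fan polytopal_cover[OF pf]] by blast
  have "u \<in> \<sigma>" using \<sigma>(2) rel_interior_subset by blast
  then obtain lam where lam: "\<forall>k. v k \<notin> \<sigma> \<longrightarrow> lam k = 0" "\<forall>k. lam k \<ge> 0"
    "u = (\<Sum>k\<in>{k. v k \<in> \<sigma>}. lam k *\<^sub>R v k)"
    using simp_struct[OF sf rg \<sigma>(1)] by blast
  have "\<forall>i. fan_coord \<Delta> v u i = lam i" using fan_coord_eq[OF sf rg \<sigma> lam(1) lam(3)] by blast
  then show ?thesis using \<sigma> lam by blast
qed

lemma coord_bdd:
  fixes \<Delta> :: "'a::euclidean_space set set" and v :: "'n::finite \<Rightarrow> 'a"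
  assumes sf: "simplicial_fan \<Delta>" and pf: "polytopal_fan \<Delta>" and rg: "ray_generators \<Delta> v"
  shows "bdd_above {fan_coord \<Delta> v u i | u i. norm u = 1}"
proof -
  have fan: "fan \<Delta>" using sf by (simp add: simplicial_fan_def)
  have "\<forall>p\<in>\<Delta> \<times> UNIV. \<exists>K. \<forall>u lam. (\<forall>k. v k \<notin> fst p \<longrightarrow> lam k = 0) \<and> u = (\<Sum>k\<in>{k. v k \<in> fst p}. lam k *\<^sub>R v k)
            \<longrightarrow> lam (snd p) \<le> K * norm u"
    using coord_bound[OF sf rg] by auto
  then obtain K where K: "\<forall>p\<in>\<Delta> \<times> UNIV. \<forall>u lam. (\<forall>k. v k \<notin> fst p \<longrightarrow> lam k = 0) \<and> u = (\<Sum>k\<in>{k. v k \<in> fst p}. lam k *\<^sub>R v k)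
            \<longrightarrow> lam (snd p) \<le> K p * norm u"
    by (rule bchoice[THEN exE]) blast
  define M where "M = Max (K ` (\<Delta> \<times> (UNIV :: 'n set)))"
  have fin: "finite (K ` (\<Delta> \<times> (UNIV :: 'n set)))" using fan_props(1)[OF fan] by simp
  show ?thesis
  proof (rule bdd_aboveI)
    fix x assume "x \<in> {fan_coord \<Delta> v u i | u i. norm u = 1}"
    then obtain u i where x: "x = fan_coord \<Delta> v u i" "norm u = 1" by blast
    obtain \<sigma> lam where \<sigma>: "\<sigma> \<in> \<Delta>" "(\<forall>k. v k \<notin> \<sigma> \<longrightarrow> lam k = 0)"
      "u = (\<Sum>k\<in>{k. v k \<in> \<sigma>}. lam k *\<^sub>R v k)" "\<forall>i. fan_coord \<Delta> v u i = lam i"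
      using coord_decomp[OF sf pf rg, of u] by blast
    have "x = lam i" using x \<sigma> by simp
    also have "\<dots> \<le> K (\<sigma>, i) * norm u" using K \<sigma> by fastforce
    also have "\<dots> = K (\<sigma>, i)" using x by simp
    also have "\<dots> \<le> M" unfolding M_def using fin \<sigma>(1) by (intro Max_ge) auto
    finally show "x \<le> M" .
  qed
qed

lemma coord_le_const:
  fixes \<Delta> :: "'a::euclidean_space set set" and v :: "'n::finite \<Rightarrow> 'a"
  assumes sf: "simplicial_fan \<Delta>" and pf: "polytopal_fan \<Delta>" and rg: "ray_generators \<Delta> v"
    and "norm u = 1"
  shows "fan_coord \<Delta> v u i \<le> fan_const \<Delta> v"
  unfolding fan_const_def using assms by (intro cSup_upper coord_bdd[OF sf pf rg]) auto

lemma const_nonneg: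
  fixes \<Delta> :: "'a::euclidean_space set set" and v :: "'n::finite \<Rightarrow> 'a"
  assumes sf: "simplicial_fan \<Delta>" and pf: "polytopal_fan \<Delta>" and rg: "ray_generators \<Delta> v"
  shows "0 \<le> fan_const \<Delta> v"
proof -
  obtain b :: 'a where b: "b \<in> Basis" using nonempty_Basis by blast
  then have nb: "norm b = 1" by simp
  obtain \<sigma> lam where \<sigma>: "\<forall>k. lam k \<ge> 0" "\<forall>i. fan_coord \<Delta> v b i = lam i"
    using coord_decomp[OF sf pf rg, of b] by blast
  have "0 \<le> fan_coord \<Delta> v b undefined" using \<sigma> by simp
  also have "\<dots> \<le> fan_const \<Delta> v" by (rule coord_le_const[OF sf pf rg nb])
  finally show ?thesis .
qed



lemma deform:
  fixes \<Delta> :: "'a::euclidean_space set set" and v :: "'n::finite \<Rightarrow> 'a"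
  assumes sf: "simplicial_fan \<Delta>" and pf: "polytopal_fan \<Delta>" and rg: "ray_generators \<Delta> v"
    and h: "h \<in> deformation_cone \<Delta> v"
  shows "\<exists>P. polytope P \<and> P \<noteq> {} \<and> Ph v h = P \<and>
    (\<forall>\<sigma>\<in>\<Delta>. \<forall>u lam. (\<forall>k. v k \<notin> \<sigma> \<longrightarrow> lam k = 0) \<and> (\<forall>k. lam k \<ge> 0) \<and> u = (\<Sum>k\<in>{k. v k \<in> \<sigma>}. lam k *\<^sub>R v k)
        \<longrightarrow> support_fun P u = (\<Sum>k\<in>{k. v k \<in> \<sigma>}. lam k * h $ k))"
proof -
  obtain P where P: "polytope P" "P \<noteq> {}" "refines \<Delta> (normal_fan P)" "\<forall>i. h $ i = support_fun P (v i)"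
    using h unfolding deformation_cone_def by blast
  have bP: "bounded P" using P(1) polytope_imp_bounded by blast
  have D2: "support_fun P u = (\<Sum>k\<in>{k. v k \<in> \<sigma>}. lam k * h $ k)"
    if \<sigma>: "\<sigma> \<in> \<Delta>" and z: "\<forall>k. v k \<notin> \<sigma> \<longrightarrow> lam k = 0" and nn: "\<forall>k. lam k \<ge> 0" and eq: "u = (\<Sum>k\<in>{k. v k \<in> \<sigma>}. lam k *\<^sub>R v k)"
    for \<sigma> u lam
  proof -
    obtain C' where "C' \<in> normal_fan P" "\<sigma> \<subseteq> C'" using P(3) \<sigma> unfolding refines_def by blast
    then obtain F where F: "F face_of P" "F \<noteq> {}" "\<sigma> \<subseteq> normal_cone P F"
      unfolding normal_fan_def by blast
    obtain x0 where x0: "x0 \<in> F" using F(2) by blast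
    have hk: "h $ k = inner x0 (v k)" if "v k \<in> \<sigma>" for k
    proof -
      have "v k \<in> normal_cone P F" using F(3) that by blast
      then have "support_fun P (v k) = inner x0 (v k)" by (rule support_normal[OF F(1) _ x0])
      then show ?thesis using P(4) by simp
    qed
    have uin: "u \<in> \<sigma>"
    proof -
      have "u \<in> convex_cone hull \<sigma>"
        unfolding eq using nn by (intro cone_hull_sum_gen) auto
      moreover have "convex_cone \<sigma>" using fan_props(2)[of \<Delta> \<sigma>] sf \<sigma> by (simp add: simplicial_fan_def)
      ultimately show ?thesis by (simp add: hull_same)
    qed
    have "u \<in> normal_cone P F" using F(3) uin by blast
    then have "support_fun P u = inner x0 u" by (rule support_normal[OF F(1) _ x0])
    also have "\<dots> = (\<Sum>k\<in>{k. v k \<in> \<sigma>}. lam k * inner x0 (v k))"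
      unfolding eq by (simp add: inner_sum_right)
    also have "\<dots> = (\<Sum>k\<in>{k. v k \<in> \<sigma>}. lam k * h $ k)" using hk by simp
    finally show ?thesis .
  qed
  have "Ph v h = P"
  proof
    show "P \<subseteq> Ph v h"
      unfolding Ph_def using P(4) support_ge[OF bP] by auto
  next
    show "Ph v h \<subseteq> P"
    proof
      fix x assume x: "x \<in> Ph v h"
      show "x \<in> P"
      proof (rule ccontr)
        assume xP: "x \<notin> P"
        obtain a b where ab: "inner a x < b" "\<forall>y\<in>P. b < inner a y"
          using separating_hyperplane_closed_point[OF polytope_imp_convex[OF P(1)]
              polytope_imp_closed[OF P(1)] xP] by blast
        define u where "u = - a"
        obtain \<sigma> where \<sigma>: "\<sigma> \<in> \<Delta>" "u \<in> \<sigma>" using polytopal_cover[OF pf] by blast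
        obtain lam where lam: "\<forall>k. v k \<notin> \<sigma> \<longrightarrow> lam k = 0" "\<forall>k. lam k \<ge> 0"
          "u = (\<Sum>k\<in>{k. v k \<in> \<sigma>}. lam k *\<^sub>R v k)"
          using simp_struct[OF sf rg \<sigma>(1)] \<sigma>(2) by blast
        have "inner x u = (\<Sum>k\<in>{k. v k \<in> \<sigma>}. lam k * inner x (v k))"
          using lam(3) by (simp add: inner_sum_right)
        also have "\<dots> \<le> (\<Sum>k\<in>{k. v k \<in> \<sigma>}. lam k * h $ k)"
          using x lam(2) unfolding Ph_def by (intro sum_mono mult_left_mono) auto
        also have "\<dots> = support_fun P u" using D2[OF \<sigma>(1) lam(1) lam(2) lam(3)] by simp
        also have "\<dots> \<le> - b" using ab(2) P(2) by (intro support_le) (auto simp: u_def inner_commute less_imp_le)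
        finally have "inner x u \<le> - b" .
        then show False using ab(1) by (simp add: u_def inner_commute)
      qed
    qed
  qed
  then show ?thesis using P(1,2) D2 by blast
qed

lemma hausdorff_half:
  fixes S T :: "'a::euclidean_space set"
  assumes S: "compact S" "S \<noteq> {}" and T: "compact T" "convex T" "T \<noteq> {}" and M: "M \<ge> 0"
    and sup: "\<And>u. norm u = 1 \<Longrightarrow> support_fun S u - support_fun T u \<le> M"
  shows "(SUP a\<in>S. infdist a T) \<le> M"
proof (rule cSUP_least[OF S(2)])
  fix a assume a: "a \<in> S"
  show "infdist a T \<le> M"
  proof (cases "a \<in> T")
    case True
    then show ?thesis using M by (simp add: infdist_zero)
  next
    case False
    have cT: "closed T" using T(1) compact_imp_closed by blast
    define p where "p = closest_point T a"
    have pT: "p \<in> T" unfolding p_def using closest_point_in_set[OF cT T(3)] .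
    define d where "d = norm (a - p)"
    have dpos: "d > 0" using False pT unfolding d_def by auto
    define u where "u = (1 / d) *\<^sub>R (a - p)"
    have nu: "norm u = 1" using dpos unfolding u_def d_def by simp
    have ip: "inner (a - p) (a - p) = d * d" unfolding d_def by (metis power2_norm_eq_inner power2_eq_square)
    have deq: "d = inner (a - p) u"
      using dpos unfolding u_def by (simp add: ip)
    have "infdist a T \<le> dist a p" using pT by (rule infdist_le)
    also have "\<dots> = d" by (simp add: d_def dist_norm)
    also have "\<dots> = inner (a - p) u" by (rule deq)
    also have "\<dots> = inner a u - inner p u" by (simp add: inner_diff_left)
    also have "\<dots> \<le> support_fun S u - support_fun T u"
    proof -
      have "inner a u \<le> support_fun S u" using support_ge[OF compact_imp_bounded[OF S(1)] a] .
      moreover have "support_fun T u \<le> inner p u"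
      proof (rule support_le[OF T(3)])
        fix y assume y: "y \<in> T"
        have "inner (a - p) (y - p) \<le> 0" unfolding p_def using closest_point_dot[OF T(2) cT y] .
        then have "inner (y - p) u \<le> 0" using dpos unfolding u_def by (simp add: inner_commute divide_nonpos_pos)
        then show "inner y u \<le> inner p u" by (simp add: inner_diff_left)
      qed
      ultimately show ?thesis by linarith
    qed
    also have "\<dots> \<le> M" using sup[OF nu] .
    finally show ?thesis .
  qed
qed



lemma sum_abs_sqrt:
  fixes d :: "'k \<Rightarrow> real"
  shows "(\<Sum>k\<in>I. \<bar>d k\<bar>) \<le> sqrt (real (card I)) * sqrt (\<Sum>k\<in>I. (d k)\<^sup>2)"
proof -
  have "(\<Sum>k\<in>I. 1 * \<bar>d k\<bar>)\<^sup>2 \<le> (\<Sum>k\<in>I. 1\<^sup>2) * (\<Sum>k\<in>I. \<bar>d k\<bar>\<^sup>2)"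
    by (rule Cauchy_Schwarz_ineq_sum)
  then have "(\<Sum>k\<in>I. \<bar>d k\<bar>)\<^sup>2 \<le> real (card I) * (\<Sum>k\<in>I. (d k)\<^sup>2)" by simp
  then have "sqrt ((\<Sum>k\<in>I. \<bar>d k\<bar>)\<^sup>2) \<le> sqrt (real (card I) * (\<Sum>k\<in>I. (d k)\<^sup>2))"
    by (rule real_sqrt_le_mono)
  moreover have "sqrt ((\<Sum>k\<in>I. \<bar>d k\<bar>)\<^sup>2) = (\<Sum>k\<in>I. \<bar>d k\<bar>)"
    by (simp add: sum_nonneg)
  ultimately show ?thesis by (simp add: real_sqrt_mult)
qed

lemma norm_vec_sq:
  fixes x :: "real^'n"
  shows "norm x = sqrt (\<Sum>i\<in>UNIV. (x $ i)\<^sup>2)"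
  unfolding norm_vec_def L2_set_def by simp

lemma support_diff_bound:
  fixes \<Delta> :: "'a::euclidean_space set set" and v :: "'n::finite \<Rightarrow> 'a"
    and h h' :: "real^'n"
  assumes sf: "simplicial_fan \<Delta>" and pf: "polytopal_fan \<Delta>" and rg: "ray_generators \<Delta> v"
    and \<sigma>: "\<sigma> \<in> \<Delta>" and z: "\<forall>k. v k \<notin> \<sigma> \<longrightarrow> lam k = 0" and nn: "\<forall>k. lam k \<ge> 0"
    and le: "\<forall>k. lam k \<le> c"
  shows "\<bar>(\<Sum>k\<in>{k. v k \<in> \<sigma>}. lam k * h $ k) - (\<Sum>k\<in>{k. v k \<in> \<sigma>}. lam k * h' $ k)\<bar>
           \<le> sqrt (real DIM('a)) * c * norm (h - h')"
proof -
  define I where "I = {k. v k \<in> \<sigma>}"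
  have c0: "c \<ge> 0" using nn le by (meson order_trans)
  have ind: "independent (v ` I)" using simp_struct[OF sf rg \<sigma>] by (simp add: I_def)
  have "card I = card (v ` I)" using rg_inj[OF rg] by (simp add: card_image inj_on_def inj_def)
  also have "\<dots> \<le> DIM('a)" using independent_bound[OF ind] by blast
  finally have cI: "card I \<le> DIM('a)" .
  define d where "d k = h $ k - h' $ k" for k
  have "\<bar>(\<Sum>k\<in>I. lam k * h $ k) - (\<Sum>k\<in>I. lam k * h' $ k)\<bar> = \<bar>\<Sum>k\<in>I. lam k * d k\<bar>"
    by (simp add: d_def sum_subtractf right_diff_distrib)
  also have "\<dots> \<le> (\<Sum>k\<in>I. \<bar>lam k * d k\<bar>)" by (rule sum_abs)
  also have "\<dots> \<le> (\<Sum>k\<in>I. c * \<bar>d k\<bar>)"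
    using nn le by (intro sum_mono) (auto simp: abs_mult intro: mult_right_mono)
  also have "\<dots> = c * (\<Sum>k\<in>I. \<bar>d k\<bar>)" by (simp add: sum_distrib_left)
  also have "\<dots> \<le> c * (sqrt (real (card I)) * sqrt (\<Sum>k\<in>I. (d k)\<^sup>2))"
    using c0 sum_abs_sqrt by (intro mult_left_mono) auto
  also have "\<dots> \<le> c * (sqrt (real DIM('a)) * norm (h - h'))"
  proof -
    have "sqrt (real (card I)) \<le> sqrt (real DIM('a))" using cI by simp
    moreover have "sqrt (\<Sum>k\<in>I. (d k)\<^sup>2) \<le> norm (h - h')"
    proof -
      have "(\<Sum>k\<in>I. (d k)\<^sup>2) \<le> (\<Sum>k\<in>UNIV. (d k)\<^sup>2)" by (rule sum_mono2) auto
      then show ?thesis unfolding norm_vec_sq d_def by simp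
    qed
    ultimately show ?thesis using c0
      by (intro mult_left_mono mult_mono) (auto simp: sum_nonneg)
  qed
  finally show ?thesis unfolding I_def by (simp add: mult_ac)
qed

theorem lemma2p5:
  fixes \<Delta> :: "'a::euclidean_space set set" and v :: "'n::finite \<Rightarrow> 'a"
    and h h' :: "real^'n"
  assumes "simplicial_fan \<Delta>" and "polytopal_fan \<Delta>" and "ray_generators \<Delta> v"
    and "h \<in> deformation_cone \<Delta> v" and "h' \<in> deformation_cone \<Delta> v"
  shows "hausdorff_dist (Ph v h) (Ph v h') \<le> sqrt (real DIM('a)) * fan_const \<Delta> v * norm (h - h')"
proof -
  note sf = assms(1) and pf = assms(2) and rg = assms(3)
  obtain P where P: "polytope P" "P \<noteq> {}" "Ph v h = P"
    "\<forall>\<sigma>\<in>\<Delta>. \<forall>u lam. (\<forall>k. v k \<notin> \<sigma> \<longrightarrow> lam k = 0) \<and> (\<forall>k. lam k \<ge> 0) \<and> u = (\<Sum>k\<in>{k. v k \<in> \<sigma>}. lam k *\<^sub>R v k)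
        \<longrightarrow> support_fun P u = (\<Sum>k\<in>{k. v k \<in> \<sigma>}. lam k * h $ k)"
    using deform[OF sf pf rg assms(4)] by blast
  obtain P' where P': "polytope P'" "P' \<noteq> {}" "Ph v h' = P'"
    "\<forall>\<sigma>\<in>\<Delta>. \<forall>u lam. (\<forall>k. v k \<notin> \<sigma> \<longrightarrow> lam k = 0) \<and> (\<forall>k. lam k \<ge> 0) \<and> u = (\<Sum>k\<in>{k. v k \<in> \<sigma>}. lam k *\<^sub>R v k)
        \<longrightarrow> support_fun P' u = (\<Sum>k\<in>{k. v k \<in> \<sigma>}. lam k * h' $ k)"
    using deform[OF sf pf rg assms(5)] by blast
  define M where "M = sqrt (real DIM('a)) * fan_const \<Delta> v * norm (h - h')"
  have M0: "M \<ge> 0" unfolding M_def using const_nonneg[OF sf pf rg] by simp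
  have key: "\<bar>support_fun P u - support_fun P' u\<bar> \<le> M" if nu: "norm u = 1" for u
  proof -
    obtain \<sigma> lam where \<sigma>: "\<sigma> \<in> \<Delta>" "(\<forall>k. v k \<notin> \<sigma> \<longrightarrow> lam k = 0)" "\<forall>k. lam k \<ge> 0"
      "u = (\<Sum>k\<in>{k. v k \<in> \<sigma>}. lam k *\<^sub>R v k)" "\<forall>i. fan_coord \<Delta> v u i = lam i"
      using coord_decomp[OF sf pf rg, of u] by blast
    have le: "\<forall>k. lam k \<le> fan_const \<Delta> v"
      using coord_le_const[OF sf pf rg nu] \<sigma>(5) by metis
    have "support_fun P u = (\<Sum>k\<in>{k. v k \<in> \<sigma>}. lam k * h $ k)" using P(4) \<sigma> by blast
    moreover have "support_fun P' u = (\<Sum>k\<in>{k. v k \<in> \<sigma>}. lam k * h' $ k)" using P'(4) \<sigma> by blast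
    ultimately show ?thesis
      unfolding M_def using support_diff_bound[OF sf pf rg \<sigma>(1,2,3) le, of h h'] by simp
  qed
  have cP: "compact P" "convex P" using P(1) polytope_imp_compact polytope_imp_convex by auto
  have cP': "compact P'" "convex P'" using P'(1) polytope_imp_compact polytope_imp_convex by auto
  have s1: "(SUP a\<in>P. infdist a P') \<le> M"
    using hausdorff_half[OF cP(1) P(2) cP' P'(2) M0] key by (meson abs_le_D1)
  have s2: "(SUP a\<in>P'. infdist a P) \<le> M"
    using hausdorff_half[OF cP'(1) P'(2) cP P(2) M0] key
    by (metis abs_minus_commute abs_le_D1)
  show ?thesis unfolding hausdorff_dist_def P(3) P'(3) M_def[symmetric] using s1 s2 by simp
qed

end
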